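(* Let $\Psi$ be a non-negative, real-valued, symmetric function of two positive integers, and for a graph $G$ let $\mathrm{BID}(G)=\sum_{uv\in E(G)}\Psi(d_u,d_v)$. Let $f:[0,\infty)\times[0,\infty)\to\mathbb{R}$ be an extension of $\Psi$. Fix integers $n,m$ and consider connected $(n,m)$-graphs. (i) Let $G$ be a connected $(n,m)$-graph with maximum BID index among all connected $(n,m)$-graphs. Suppose that both expressions $$f(x+t,y)-f(x,y)+f(c-t,y)-f(c,y)\quad\text{and}\quad f(x+t,c-t)-f(x,c)$$ are non-negative for all $x,c,t,y$ with $x\geq c>t\geq 1$, $c\geq 2$, $y\geq 1$. Suppose further that one of the following holds: (a) $f$ is increasing in both variables on $[1,\infty)$, and at least one of the two expressions above is positive (for all such $x,c,t,y$); (b) $f$ is strictly increasing in both variables on $[1,\infty)$. Then the maximum vertex degree in $G$ is $n-1$. (ii) Let $G$ be a connected $(n,m)$-graph with minimum BID index among all connected $(n,m)$-graphs. Suppose that both expressions $$f(x+t,y)-f(x,y)+f(c-t,y)-f(c,y)\quad\text{and}\quad f(x+t,c-t)-f(x,c)$$ are non-positive for all $x,c,t,y$ with $x\geq c>t\geq 1$, $c\geq 2$, $y\geq 1$. Suppose further that one of the following holds: (a) $f$ is decreasing in both variables on $[1,\infty)$, and at least one of the two expressions above is negative (for all such $x,c,t,y$); (b) $f$ is strictly decreasing in both variables on $[1,\infty)$. Then the maximum vertex degree in $G$ is $n-1$.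
   Context: All graphs are finite, simple, undirected and connected. An $(n,m)$-graph is a graph with $n$ vertices and $m$ edges. $d_u$ denotes the degree of vertex $u$ and $E(G)$ the edge set of $G$. *)

theory Defs
  imports Complex_Main
begin

definition simple_graph :: "nat set \<Rightarrow> nat set set \<Rightarrow> bool" where
  "simple_graph V E \<longleftrightarrow> finite V \<and> (\<forall>e\<in>E. e \<subseteq> V \<and> card e = 2)"

definition adj_rel :: "nat set set \<Rightarrow> (nat \<times> nat) set" where
  "adj_rel E = {(a, b). {a, b} \<in> E}"

definition connected_graph :: "nat set \<Rightarrow> nat set set \<Rightarrow> bool" where
  "connected_graph V E \<longleftrightarrow> simple_graph V E \<and> V \<noteq> {} \<and>
     (\<forall>u\<in>V. \<forall>v\<in>V. (u, v) \<in> (adj_rel E)\<^sup>*)"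

definition conn_nm_graph :: "nat \<Rightarrow> nat \<Rightarrow> nat set \<Rightarrow> nat set set \<Rightarrow> bool" where
  "conn_nm_graph n m V E \<longleftrightarrow> connected_graph V E \<and> card V = n \<and> card E = m"

definition degree :: "nat set set \<Rightarrow> nat \<Rightarrow> nat" where
  "degree E u = card {e \<in> E. u \<in> e}"

definition max_degree :: "nat set \<Rightarrow> nat set set \<Rightarrow> nat" where
  "max_degree V E = Max (degree E ` V)"

text \<open>BID(G) = sum over edges uv of Psi(d_u, d_v). For an edge e = {u,v} the inner double sum
  equals Psi(d_u,d_v) + Psi(d_v,d_u), which is 2 Psi(d_u,d_v) for symmetric Psi.\<close>
definition BID :: "(nat \<Rightarrow> nat \<Rightarrow> real) \<Rightarrow> nat set set \<Rightarrow> real" where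
  "BID \<Psi> E = (\<Sum>e\<in>E. (\<Sum>u\<in>e. \<Sum>v\<in>e - {u}. \<Psi> (degree E u) (degree E v)) / 2)"

definition incr_both_on_ge1 :: "(real \<Rightarrow> real \<Rightarrow> real) \<Rightarrow> bool" where
  "incr_both_on_ge1 f \<longleftrightarrow>
     (\<forall>x x' y. 1 \<le> x \<and> x \<le> x' \<and> 1 \<le> y \<longrightarrow> f x y \<le> f x' y \<and> f y x \<le> f y x')"

definition strict_incr_both_on_ge1 :: "(real \<Rightarrow> real \<Rightarrow> real) \<Rightarrow> bool" where
  "strict_incr_both_on_ge1 f \<longleftrightarrow>
     (\<forall>x x' y. 1 \<le> x \<and> x < x' \<and> 1 \<le> y \<longrightarrow> f x y < f x' y \<and> f y x < f y x')"

definition decr_both_on_ge1 :: "(real \<Rightarrow> real \<Rightarrow> real) \<Rightarrow> bool" where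
  "decr_both_on_ge1 f \<longleftrightarrow>
     (\<forall>x x' y. 1 \<le> x \<and> x \<le> x' \<and> 1 \<le> y \<longrightarrow> f x' y \<le> f x y \<and> f y x' \<le> f y x)"

definition strict_decr_both_on_ge1 :: "(real \<Rightarrow> real \<Rightarrow> real) \<Rightarrow> bool" where
  "strict_decr_both_on_ge1 f \<longleftrightarrow>
     (\<forall>x x' y. 1 \<le> x \<and> x < x' \<and> 1 \<le> y \<longrightarrow> f x' y < f x y \<and> f y x' < f y x)"

definition adm :: "real \<Rightarrow> real \<Rightarrow> real \<Rightarrow> real \<Rightarrow> bool" where
  "adm x c t y \<longleftrightarrow> x \<ge> c \<and> c > t \<and> t \<ge> 1 \<and> c \<ge> 2 \<and> y \<ge> 1"

definition expr1 :: "(real \<Rightarrow> real \<Rightarrow> real) \<Rightarrow> real \<Rightarrow> real \<Rightarrow> real \<Rightarrow> real \<Rightarrow> real" where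
  "expr1 f x c t y = f (x + t) y - f x y + f (c - t) y - f c y"

definition expr2 :: "(real \<Rightarrow> real \<Rightarrow> real) \<Rightarrow> real \<Rightarrow> real \<Rightarrow> real \<Rightarrow> real" where
  "expr2 f x c t = f (x + t) (c - t) - f x c"

end

theory Submission
  imports Defs
begin

definition ew :: "(nat \<Rightarrow> nat \<Rightarrow> real) \<Rightarrow> (nat \<Rightarrow> nat) \<Rightarrow> nat set \<Rightarrow> real" where
  "ew \<Psi> D e = (\<Sum>a\<in>e. \<Sum>b\<in>e - {a}. \<Psi> (D a) (D b)) / 2"

lemma BID_ew: "BID \<Psi> E = sum (ew \<Psi> (degree E)) E"
  unfolding BID_def ew_def by simp

lemma ew_pair: "p \<noteq> z \<Longrightarrow> ew \<Psi> D {p,z} = (\<Psi> (D p) (D z) + \<Psi> (D z) (D p)) / 2"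
  unfolding ew_def by (simp add: insert_Diff_if)

lemma sg_finite: "simple_graph V E \<Longrightarrow> finite E"
proof -
  assume "simple_graph V E"
  then have "E \<subseteq> Pow V" "finite V" unfolding simple_graph_def by auto
  then show ?thesis by (meson finite_Pow_iff finite_subset)
qed

lemma sg_noloop: "simple_graph V E \<Longrightarrow> {p,p} \<notin> E"
  unfolding simple_graph_def by auto

lemma sg_edge: "simple_graph V E \<Longrightarrow> e \<in> E \<Longrightarrow> \<exists>a b. a \<noteq> b \<and> e = {a,b}"
proof -
  assume "simple_graph V E" "e \<in> E"
  then have "card e = 2" by (simp add: simple_graph_def)
  then obtain a b where "e = {a,b}" "a \<noteq> b" by (auto simp: card_2_iff)
  then show ?thesis by blast
qed

lemma sg_nbV: "simple_graph V E \<Longrightarrow> {z. {p,z} \<in> E} \<subseteq> V"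
  unfolding simple_graph_def by auto

lemma pair_at: "p \<in> {a,b} \<Longrightarrow> \<exists>z. {a,b} = {p,z}"
proof -
  assume "p \<in> {a,b}"
  then have "p = a \<or> p = b" by blast
  then show ?thesis
  proof
    assume "p = a" then show ?thesis by blast
  next
    assume "p = b" then have "{a,b} = {p,a}" by (simp add: insert_commute)
    then show ?thesis by blast
  qed
qed

lemma bijA: assumes "simple_graph V E"
  shows "bij_betw (\<lambda>z. {p,z}) {z. {p,z}\<in>E} {e\<in>E. p\<in>e}"
  unfolding bij_betw_def
proof
  show "inj_on (\<lambda>z. {p, z}) {z. {p, z} \<in> E}" by (auto simp: inj_on_def doubleton_eq_iff)
  show "(\<lambda>z. {p, z}) ` {z. {p, z} \<in> E} = {e \<in> E. p \<in> e}"
  proof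
    show "{e \<in> E. p \<in> e} \<subseteq> (\<lambda>z. {p, z}) ` {z. {p, z} \<in> E}"
    proof
      fix e assume "e \<in> {e \<in> E. p \<in> e}"
      then obtain a b where "a \<noteq> b" "e = {a,b}" "e \<in> E" "p \<in> e" using sg_edge[OF assms] by blast
      then obtain z where "e = {p,z}" using pair_at[of p a b] by blast
      then show "e \<in> (\<lambda>z. {p, z}) ` {z. {p, z} \<in> E}"
        using \<open>e \<in> E\<close> by blast
    qed
  qed auto
qed

lemma bijB: assumes "simple_graph V E" "q \<noteq> p"
  shows "bij_betw (\<lambda>z. {p,z}) ({z. {p,z}\<in>E} - {q}) {e\<in>E. q \<notin> e \<and> p\<in>e}"
  unfolding bij_betw_def
proof
  show "inj_on (\<lambda>z. {p, z}) ({z. {p, z} \<in> E} - {q})" by (auto simp: inj_on_def doubleton_eq_iff)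
  show "(\<lambda>z. {p, z}) ` ({z. {p, z} \<in> E} - {q}) = {e \<in> E. q \<notin> e \<and> p \<in> e}"
  proof
    show "{e \<in> E. q \<notin> e \<and> p \<in> e} \<subseteq> (\<lambda>z. {p, z}) ` ({z. {p, z} \<in> E} - {q})"
    proof
      fix e assume "e \<in> {e \<in> E. q \<notin> e \<and> p \<in> e}"
      then obtain a b where "a \<noteq> b" "e = {a,b}" "e \<in> E" "p \<in> e" "q \<notin> e" using sg_edge[OF assms(1)] by blast
      then obtain z where "e = {p,z}" using pair_at[of p a b] by blast
      then show "e \<in> (\<lambda>z. {p, z}) ` ({z. {p, z} \<in> E} - {q})"
        using \<open>e \<in> E\<close> \<open>q \<notin> e\<close> by blast
    qed
  qed (use assms in auto)
qed

lemma deg_nb: "simple_graph V E \<Longrightarrow> degree E p = card {z. {p,z}\<in>E}"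
  unfolding degree_def by (rule bij_betw_same_card[OF bijA, symmetric])

lemma nb_finite: "simple_graph V E \<Longrightarrow> finite {z. {p,z}\<in>E}"
  using sg_nbV[of V E p] unfolding simple_graph_def using finite_subset by blast

lemma deg_pos: "simple_graph V E \<Longrightarrow> {p,z} \<in> E \<Longrightarrow> 1 \<le> degree E z"
proof -
  assume a: "simple_graph V E" "{p,z} \<in> E"
  then have "p \<in> {y. {z,y}\<in>E}" by (simp add: insert_commute)
  then have "card {y. {z,y}\<in>E} \<noteq> 0" using nb_finite[OF a(1)] by auto
  then show ?thesis using deg_nb[OF a(1)] by simp
qed

lemma sum_edges_u: "simple_graph V E \<Longrightarrow> sum g {e\<in>E. p\<in>e} = (\<Sum>z\<in>{z. {p,z}\<in>E}. g {p,z})"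
  by (rule sum.reindex_bij_betw[OF bijA, symmetric])

lemma sum_edges_v: "simple_graph V E \<Longrightarrow> q \<noteq> p \<Longrightarrow> sum g {e\<in>E. q\<notin>e \<and> p\<in>e} = (\<Sum>z\<in>{z. {p,z}\<in>E} - {q}. g {p,z})"
  by (rule sum.reindex_bij_betw[OF bijB, symmetric])

lemma split3: "finite E \<Longrightarrow> sum g E = sum g {e\<in>E. u\<in>e} + sum g {e\<in>E. u\<notin>e \<and> v\<in>e} + sum g {e\<in>E. u\<notin>e \<and> v\<notin>e}"
proof -
  assume f: "finite E"
  have "E = {e\<in>E. u\<in>e} \<union> ({e\<in>E. u\<notin>e \<and> v\<in>e} \<union> {e\<in>E. u\<notin>e \<and> v\<notin>e})" by auto
  then have "sum g E = sum g ({e\<in>E. u\<in>e} \<union> ({e\<in>E. u\<notin>e \<and> v\<in>e} \<union> {e\<in>E. u\<notin>e \<and> v\<notin>e}))" by simp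
  also have "\<dots> = sum g {e\<in>E. u\<in>e} + sum g ({e\<in>E. u\<notin>e \<and> v\<in>e} \<union> {e\<in>E. u\<notin>e \<and> v\<notin>e})"
    by (rule sum.union_disjoint) (use f in auto)
  also have "sum g ({e\<in>E. u\<notin>e \<and> v\<in>e} \<union> {e\<in>E. u\<notin>e \<and> v\<notin>e}) = sum g {e\<in>E. u\<notin>e \<and> v\<in>e} + sum g {e\<in>E. u\<notin>e \<and> v\<notin>e}"
    by (rule sum.union_disjoint) (use f in auto)
  finally show ?thesis by (simp add: add.assoc)
qed

lemma cross: "(p,q) \<in> r\<^sup>* \<Longrightarrow> p\<in>S \<Longrightarrow> q\<notin>S \<Longrightarrow> \<exists>a b. (a,b)\<in>r \<and> a\<in>S \<and> b\<notin>S"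
proof (induction rule: rtrancl_induct)
  case base then show ?case by simp
next
  case (step y z) then show ?case by blast
qed

lemma ew_sym: assumes "p \<noteq> z" "1 \<le> D p" "1 \<le> D z" "\<And>a b. 1\<le>a \<Longrightarrow> 1\<le>b \<Longrightarrow> \<Psi> a b = \<Psi> b a"
  shows "ew \<Psi> D {p,z} = \<Psi> (D p) (D z)"
proof -
  have "\<Psi> (D z) (D p) = \<Psi> (D p) (D z)" using assms(2-4) by metis
  then show ?thesis using ew_pair[OF assms(1), of \<Psi> D] by simp
qed

lemma img_pair: "{p,q} \<in> (\<lambda>z. {r,z}) ` B \<longleftrightarrow> (p = r \<and> q \<in> B) \<or> (q = r \<and> p \<in> B)"
proof
  assume "{p,q} \<in> (\<lambda>z. {r,z}) ` B"
  then obtain z where "z \<in> B" "{p,q} = {r,z}" by blast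
  then show "(p = r \<and> q \<in> B) \<or> (q = r \<and> p \<in> B)" unfolding doubleton_eq_iff by blast
next
  assume "(p = r \<and> q \<in> B) \<or> (q = r \<and> p \<in> B)"
  then show "{p,q} \<in> (\<lambda>z. {r,z}) ` B" by (auto simp: insert_commute)
qed


lemma core:
  fixes \<Psi> :: "nat \<Rightarrow> nat \<Rightarrow> real" and f :: "real \<Rightarrow> real \<Rightarrow> real"
  assumes sym: "\<And>a b. 1 \<le> a \<Longrightarrow> 1 \<le> b \<Longrightarrow> \<Psi> a b = \<Psi> b a"
    and ext: "\<And>a b. 1 \<le> a \<Longrightarrow> 1 \<le> b \<Longrightarrow> f (real a) (real b) = \<Psi> a b"
    and G: "conn_nm_graph n m V E"
    and H1: "\<forall>x c t y. adm x c t y \<longrightarrow> expr1 f x c t y \<ge> 0 \<and> expr2 f x c t \<ge> 0"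
    and H2: "incr_both_on_ge1 f"
    and H3: "(\<forall>x c t y. adm x c t y \<longrightarrow> expr2 f x c t > 0) \<or>
             (\<forall>x t y. 2 \<le> x \<and> 1 \<le> t \<and> t + 1 \<le> x \<and> 1 \<le> y \<longrightarrow> f x y < f (x+t) y)"
    and uV: "u \<in> V" and umax: "\<forall>z\<in>V. degree E z \<le> degree E u"
    and wV: "w \<in> V" "w \<noteq> u" "{u,w} \<notin> E"
  shows "\<exists>V' E'. conn_nm_graph n m V' E' \<and> BID \<Psi> E < BID \<Psi> E'"
proof -
  have sg: "simple_graph V E" and conn: "\<forall>p\<in>V. \<forall>q\<in>V. (p,q) \<in> (adj_rel E)\<^sup>*"
    and cV: "card V = n" and cE: "card E = m" and Vne: "V \<noteq> {}"
    using G unfolding conn_nm_graph_def connected_graph_def by auto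
  have finE: "finite E" using sg_finite[OF sg] .
  have finV: "finite V" using sg simple_graph_def by auto
  define Nb where "Nb p = {z. {p,z} \<in> E}" for p
  have Nb_fin: "finite (Nb p)" for p using nb_finite[OF sg] Nb_def by simp
  have Nb_sym: "q \<in> Nb p \<longleftrightarrow> p \<in> Nb q" for p q by (simp add: Nb_def insert_commute)
  have Nb_noloop: "p \<notin> Nb p" for p using sg_noloop[OF sg] Nb_def by auto
  have Nb_V: "Nb p \<subseteq> V" for p using sg_nbV[OF sg] Nb_def by simp
  have d_Nb: "degree E p = card (Nb p)" for p using deg_nb[OF sg] Nb_def by simp
  have "(u,w) \<in> (adj_rel E)\<^sup>*" using conn uV wV by blast
  moreover have "w \<notin> insert u (Nb u)" using wV Nb_def by auto
  ultimately obtain a b where ab: "(a,b) \<in> adj_rel E" "a \<in> insert u (Nb u)" "b \<notin> insert u (Nb u)"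
    using cross[of u w "adj_rel E" "insert u (Nb u)"] by blast
  have ab_E: "{a,b} \<in> E" using ab(1) adj_rel_def by auto
  have "a \<noteq> u" using ab ab_E Nb_def by auto
  hence a_Nb: "a \<in> Nb u" using ab by auto
  define v where "v = a"
  define B where "B = {z \<in> Nb v. z \<noteq> u \<and> z \<notin> Nb u}"
  have bB: "b \<in> B" using ab ab_E unfolding B_def Nb_def v_def by auto
  have uv: "{u,v} \<in> E" using a_Nb Nb_def v_def by simp
  have vu: "v \<noteq> u" using uv sg_noloop[OF sg] by auto
  have u_Nbv: "u \<in> Nb v" using a_Nb Nb_sym v_def by simp
  have v_Nbu: "v \<in> Nb u" using a_Nb v_def by simp
  have vV: "v \<in> V" using v_Nbu Nb_V by blast
  have B_sub: "B \<subseteq> Nb v" unfolding B_def by auto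
  have BV: "B \<subseteq> V" using B_sub Nb_V by blast
  have finB: "finite B" using B_sub Nb_fin finite_subset by blast
  have uB: "u \<notin> B" and vB: "v \<notin> B" unfolding B_def using Nb_noloop by auto
  have BNu: "B \<inter> Nb u = {}" unfolding B_def by auto
  define t where "t = card B"
  have t1: "1 \<le> t" using bB finB t_def card_0_eq[OF finB] by fastforce
  define x where "x = degree E u"
  define c where "c = degree E v"
  have "B \<subseteq> Nb v - {u}" using B_sub uB by auto
  then have "t \<le> card (Nb v - {u})" unfolding t_def using Nb_fin card_mono by blast
  also have "\<dots> = c - 1" using card_Diff_singleton[OF u_Nbv] d_Nb c_def by simp
  finally have tc1: "t \<le> c - 1" .
  have "{u,b} \<subseteq> Nb v" using u_Nbv bB B_sub by auto
  moreover have "u \<noteq> b" using bB uB by auto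
  ultimately have c2: "2 \<le> c" using card_mono[OF Nb_fin, of "{u,b}" v] d_Nb c_def by simp
  have tc: "t < c" using tc1 c2 by linarith
  have cx: "c \<le> x" unfolding c_def x_def using bspec[OF umax vV] .
  define Ev where "Ev = (\<lambda>z. {v,z}) ` B"
  define Eu where "Eu = (\<lambda>z. {u,z}) ` B"
  define E' where "E' = (E - Ev) \<union> Eu"
  have E'_iff: "{p,q} \<in> E' \<longleftrightarrow> ({p,q} \<in> E \<and> \<not> ((p = v \<and> q \<in> B) \<or> (q = v \<and> p \<in> B))) \<or> (p = u \<and> q \<in> B) \<or> (q = u \<and> p \<in> B)" for p q
    unfolding E'_def Ev_def Eu_def using img_pair[of p q v B] img_pair[of p q u B] by blast
  define Nb' where "Nb' p = {z. {p,z} \<in> E'}" for p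
  have Nb'_u: "Nb' u = Nb u \<union> B" unfolding Nb'_def Nb_def using E'_iff vu uB by auto
  have Nb'_v: "Nb' v = Nb v - B" unfolding Nb'_def Nb_def using E'_iff vu vB by auto
  have Nb'_o: "Nb' p = (if p \<in> B then insert u (Nb p - {v}) else Nb p)" if "p \<noteq> u" "p \<noteq> v" for p
    unfolding Nb'_def Nb_def using E'_iff that by auto
  have inj_v: "inj_on (\<lambda>z. {v,z}) B" by (auto simp: inj_on_def doubleton_eq_iff)
  have inj_u: "inj_on (\<lambda>z. {u,z}) B" by (auto simp: inj_on_def doubleton_eq_iff)
  have cEv: "card Ev = t" unfolding Ev_def t_def using card_image[OF inj_v] .
  have cEu: "card Eu = t" unfolding Eu_def t_def using card_image[OF inj_u] .
  have EvE: "Ev \<subseteq> E" unfolding Ev_def using B_sub Nb_def by auto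
  have EuE: "Eu \<inter> E = {}" unfolding Eu_def using BNu Nb_def by auto
  have finEu: "finite Eu" unfolding Eu_def using finB by simp
  have tm: "t \<le> m" using card_mono[OF finE EvE] cEv cE by simp
  have cE': "card E' = m"
  proof -
    have "card E' = card (E - Ev) + card Eu" unfolding E'_def
      by (rule card_Un_disjoint) (use finE finEu EuE in auto)
    also have "card (E - Ev) = m - t" using card_Diff_subset[OF finite_subset[OF EvE finE] EvE] cE cEv by simp
    finally show ?thesis using cEu tm by simp
  qed
  have sg': "simple_graph V E'"
    unfolding simple_graph_def
  proof (rule conjI[OF finV], rule ballI)
    fix e assume "e \<in> E'"
    then have "e \<in> E \<or> e \<in> Eu" unfolding E'_def by auto
    then show "e \<subseteq> V \<and> card e = 2"
    proof
      assume "e \<in> E" then show ?thesis using sg unfolding simple_graph_def by auto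
    next
      assume "e \<in> Eu"
      then obtain z where "z \<in> B" "e = {u,z}" unfolding Eu_def by auto
      note zz = this
      have "u \<noteq> z" using zz uB by auto
      then show ?thesis using zz BV uV by auto
    qed
  qed
  have step: "(p,q) \<in> (adj_rel E')\<^sup>*" if "(p,q) \<in> adj_rel E" for p q
  proof -
    have pq: "{p,q} \<in> E" using that adj_rel_def by auto
    have vu': "(v,u) \<in> adj_rel E'" "(u,v) \<in> adj_rel E'"
      unfolding adj_rel_def using E'_iff[of v u] E'_iff[of u v] uv uB vB vu by (auto simp: insert_commute)
    show ?thesis
    proof (cases "{p,q} \<in> E'")
      case True then have "(p,q) \<in> adj_rel E'" by (simp add: adj_rel_def)
      then show ?thesis by (rule r_into_rtrancl)
    next
      case False
      then have "(p = v \<and> q \<in> B) \<or> (q = v \<and> p \<in> B)" using E'_iff pq by blast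
      then show ?thesis
      proof
        assume h: "p = v \<and> q \<in> B"
        then have "(u,q) \<in> adj_rel E'" unfolding adj_rel_def using E'_iff by auto
        then show ?thesis using vu' h by (meson r_into_rtrancl rtrancl_trans)
      next
        assume h: "q = v \<and> p \<in> B"
        then have "(p,u) \<in> adj_rel E'" unfolding adj_rel_def using E'_iff by auto
        then show ?thesis using vu' h by (meson r_into_rtrancl rtrancl_trans)
      qed
    qed
  qed
  have "(adj_rel E)\<^sup>* \<subseteq> (adj_rel E')\<^sup>*"
    by (rule rtrancl_subset_rtrancl) (use step in auto)
  then have conn': "\<forall>p\<in>V. \<forall>q\<in>V. (p,q) \<in> (adj_rel E')\<^sup>*" using conn by blast
  have G': "conn_nm_graph n m V E'"
    unfolding conn_nm_graph_def connected_graph_def using sg' conn' Vne cV cE' by blast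
  have d'_Nb: "degree E' p = card (Nb' p)" for p using deg_nb[OF sg'] Nb'_def by simp
  have d'u: "degree E' u = x + t"
    using d'_Nb[of u] Nb'_u card_Un_disjoint[OF Nb_fin finB, of u] BNu d_Nb x_def t_def by (simp add: Int_commute)
  have d'v: "degree E' v = c - t"
    using d'_Nb[of v] Nb'_v card_Diff_subset[OF finB B_sub] d_Nb c_def t_def by simp
  have d'o: "degree E' p = degree E p" if "p \<noteq> u" "p \<noteq> v" for p
  proof (cases "p \<in> B")
    case True
    then have "v \<in> Nb p" "u \<notin> Nb p" using B_def Nb_sym by auto
    then have "card (insert u (Nb p - {v})) = card (Nb p)"
    proof -
      have "0 < card (Nb p)" using Nb_fin[of p] \<open>v \<in> Nb p\<close> card_gt_0_iff by blast
      then show ?thesis using Nb_fin \<open>v \<in> Nb p\<close> \<open>u \<notin> Nb p\<close> by (simp add: card_Diff_singleton card.insert_remove)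
    qed
    then show ?thesis using True d'_Nb d_Nb Nb'_o that by simp
  next
    case False
    then show ?thesis using d'_Nb d_Nb Nb'_o that by simp
  qed
  define FF where "FF a b = f (real a) (real b)" for a b
  define D where "D = degree E"
  define D' where "D' = degree E'"
  have degpos: "1 \<le> D z" if "z \<in> Nb p" for z p using deg_pos[OF sg] that Nb_def D_def by simp
  have gE: "ew \<Psi> D {p,z} = FF (D p) (D z)" if "z \<in> Nb p" for p z
  proof -
    have "p \<noteq> z" using that Nb_noloop by auto
    moreover have "1 \<le> D p" using degpos[of p z] that Nb_sym by simp
    moreover have "1 \<le> D z" using degpos that by simp
    ultimately show ?thesis using ew_sym[of p z D \<Psi>] sym ext FF_def by simp
  qed
  have gE': "ew \<Psi> D' {p,z} = FF (D' p) (D' z)" if "z \<in> Nb' p" for p z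
  proof -
    have e: "{p,z} \<in> E'" using that Nb'_def by simp
    have "p \<noteq> z" using e sg_noloop[OF sg'] by auto
    moreover have "1 \<le> D' p" using deg_pos[OF sg', of z p] e D'_def by (simp add: insert_commute)
    moreover have "1 \<le> D' z" using deg_pos[OF sg' e] D'_def by simp
    ultimately show ?thesis using ew_sym[of p z D' \<Psi>] sym ext FF_def by simp
  qed
  have x1: "1 \<le> x" using degpos[of u v] u_Nbv x_def D_def by simp
  have S_E: "BID \<Psi> E = (\<Sum>z\<in>Nb u. ew \<Psi> D {u,z}) + (\<Sum>z\<in>Nb v - {u}. ew \<Psi> D {v,z}) + sum (ew \<Psi> D) {e\<in>E. u\<notin>e \<and> v\<notin>e}"
    using BID_ew[of \<Psi> E] split3[OF finE, of "ew \<Psi> D" u v] sum_edges_u[OF sg, of "ew \<Psi> D" u]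
      sum_edges_v[OF sg vu[symmetric], of "ew \<Psi> D"] unfolding Nb_def D_def by simp
  have S_E': "BID \<Psi> E' = (\<Sum>z\<in>Nb' u. ew \<Psi> D' {u,z}) + (\<Sum>z\<in>Nb' v - {u}. ew \<Psi> D' {v,z}) + sum (ew \<Psi> D') {e\<in>E'. u\<notin>e \<and> v\<notin>e}"
    using BID_ew[of \<Psi> E'] split3[OF sg_finite[OF sg'], of "ew \<Psi> D'" u v] sum_edges_u[OF sg', of "ew \<Psi> D'" u]
      sum_edges_v[OF sg' vu[symmetric], of "ew \<Psi> D'"] unfolding Nb'_def D'_def by simp
  have Rset: "{e\<in>E'. u\<notin>e \<and> v\<notin>e} = {e\<in>E. u\<notin>e \<and> v\<notin>e}"
    unfolding E'_def Ev_def Eu_def by auto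
  have Rsum: "sum (ew \<Psi> D') {e\<in>E'. u\<notin>e \<and> v\<notin>e} = sum (ew \<Psi> D) {e\<in>E. u\<notin>e \<and> v\<notin>e}"
    unfolding Rset
  proof (rule sum.cong[OF refl])
    fix e assume e: "e \<in> {e\<in>E. u\<notin>e \<and> v\<notin>e}"
    then obtain p q where pq: "p \<noteq> q" "e = {p,q}" using sg_edge[OF sg] by blast
    then have "p \<noteq> u" "p \<noteq> v" "q \<noteq> u" "q \<noteq> v" using e by auto
    then have "D' p = D p" "D' q = D q" using d'o D_def D'_def by auto
    then show "ew \<Psi> D' e = ew \<Psi> D e" unfolding pq(2) ew_pair[OF pq(1)] by simp
  qed
  have d'oD: "D' p = D p" if "p \<noteq> u" "p \<noteq> v" for p using d'o that D_def D'_def by simp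
  have cong': "(\<Sum>z\<in>A. h (D' z)) = (\<Sum>z\<in>A. h (D z))" if "u \<notin> A" "v \<notin> A" for A and h :: "nat \<Rightarrow> real"
  proof (rule sum.cong[OF refl])
    fix z assume "z \<in> A" then have "z \<noteq> u" "z \<noteq> v" using that by auto
    then show "h (D' z) = h (D z)" using d'oD by simp
  qed
  define C where "C = Nb v - {u} - B"
  define R where "R = Nb u - {v} - C"
  have finC: "finite C" using C_def Nb_fin by simp
  have finR: "finite R" using R_def Nb_fin by simp
  have C_sub: "C \<subseteq> Nb u - {v}" unfolding C_def B_def using Nb_noloop by auto
  have A1: "(\<Sum>z\<in>Nb u. ew \<Psi> D {u,z}) = FF x c + (\<Sum>z\<in>C. FF x (D z)) + (\<Sum>z\<in>R. FF x (D z))"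
  proof -
    have "(\<Sum>z\<in>Nb u. ew \<Psi> D {u,z}) = (\<Sum>z\<in>Nb u. FF x (D z))"
      using gE x_def D_def by simp
    also have "\<dots> = FF x c + (\<Sum>z\<in>Nb u - {v}. FF x (D z))"
      using sum.remove[OF Nb_fin v_Nbu, of "\<lambda>z. FF x (D z)"] c_def D_def by simp
    also have "(\<Sum>z\<in>Nb u - {v}. FF x (D z)) = (\<Sum>z\<in>R. FF x (D z)) + (\<Sum>z\<in>C. FF x (D z))"
      unfolding R_def by (rule sum.subset_diff[OF C_sub]) (use Nb_fin in simp)
    finally show ?thesis by simp
  qed
  have A1': "(\<Sum>z\<in>Nb' u. ew \<Psi> D' {u,z}) = FF (x+t) (c-t) + (\<Sum>z\<in>C. FF (x+t) (D z)) + (\<Sum>z\<in>R. FF (x+t) (D z)) + (\<Sum>z\<in>B. FF (x+t) (D z))"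
  proof -
    have "(\<Sum>z\<in>Nb' u. ew \<Psi> D' {u,z}) = (\<Sum>z\<in>Nb' u. FF (x+t) (D' z))"
      using gE' d'u D'_def by simp
    also have "\<dots> = (\<Sum>z\<in>Nb u. FF (x+t) (D' z)) + (\<Sum>z\<in>B. FF (x+t) (D' z))"
      unfolding Nb'_u by (rule sum.union_disjoint) (use Nb_fin finB BNu in auto)
    also have "(\<Sum>z\<in>B. FF (x+t) (D' z)) = (\<Sum>z\<in>B. FF (x+t) (D z))"
      using cong'[of B "FF (x+t)"] uB vB by simp
    also have "(\<Sum>z\<in>Nb u. FF (x+t) (D' z)) = FF (x+t) (c-t) + (\<Sum>z\<in>Nb u - {v}. FF (x+t) (D' z))"
      using sum.remove[OF Nb_fin v_Nbu, of "\<lambda>z. FF (x+t) (D' z)"] d'v D'_def by simp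
    also have "(\<Sum>z\<in>Nb u - {v}. FF (x+t) (D' z)) = (\<Sum>z\<in>Nb u - {v}. FF (x+t) (D z))"
      using cong'[of "Nb u - {v}" "FF (x+t)"] Nb_noloop by simp
    also have "(\<Sum>z\<in>Nb u - {v}. FF (x+t) (D z)) = (\<Sum>z\<in>R. FF (x+t) (D z)) + (\<Sum>z\<in>C. FF (x+t) (D z))"
      unfolding R_def by (rule sum.subset_diff[OF C_sub]) (use Nb_fin in simp)
    finally show ?thesis by simp
  qed
  have A2: "(\<Sum>z\<in>Nb v - {u}. ew \<Psi> D {v,z}) = (\<Sum>z\<in>C. FF c (D z)) + (\<Sum>z\<in>B. FF c (D z))"
  proof -
    have NCB: "Nb v - {u} = C \<union> B" unfolding C_def using B_sub uB by auto
    have "(\<Sum>z\<in>Nb v - {u}. ew \<Psi> D {v,z}) = (\<Sum>z\<in>Nb v - {u}. FF c (D z))"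
      using gE c_def D_def by simp
    also have "\<dots> = (\<Sum>z\<in>C \<union> B. FF c (D z))" unfolding NCB ..
    also have "(\<Sum>z\<in>C \<union> B. FF c (D z)) = (\<Sum>z\<in>C. FF c (D z)) + (\<Sum>z\<in>B. FF c (D z))"
      by (rule sum.union_disjoint) (use finC finB C_def in auto)
    finally show ?thesis .
  qed
  have A2': "(\<Sum>z\<in>Nb' v - {u}. ew \<Psi> D' {v,z}) = (\<Sum>z\<in>C. FF (c-t) (D z))"
  proof -
    have CC: "Nb' v - {u} = C" unfolding C_def Nb'_v by auto
    have "(\<Sum>z\<in>Nb' v - {u}. ew \<Psi> D' {v,z}) = (\<Sum>z\<in>Nb' v - {u}. FF (c-t) (D' z))"
      using gE' d'v D'_def by simp
    also have "\<dots> = (\<Sum>z\<in>C. FF (c-t) (D z))" unfolding CC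
      using cong'[of C "FF (c-t)"] Nb_noloop C_def by simp
    finally show ?thesis .
  qed
  have rxt: "real (x+t) = real x + real t" by simp
  have rct: "real (c-t) = real c - real t" using tc by simp
  have admy: "adm (real x) (real c) (real t) y" if "1 \<le> y" for y
    unfolding adm_def using cx tc t1 c2 that by simp
  have I1: "0 \<le> FF (x+t) (D z) - FF x (D z) + FF (c-t) (D z) - FF c (D z)" if "z \<in> C" for z
  proof -
    have "1 \<le> real (D z)" using degpos that C_def by force
    then have "expr1 f (real x) (real c) (real t) (real (D z)) \<ge> 0" using H1 admy by blast
    then show ?thesis unfolding expr1_def FF_def rxt rct by simp
  qed
  have I2: "0 \<le> FF (x+t) (c-t) - FF x c"
    using H1 admy[of 1] unfolding expr2_def FF_def rxt rct by auto
  have mono: "f a y \<le> f a' y" if "1 \<le> a" "a \<le> a'" "1 \<le> y" for a a' y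
    using H2 that unfolding incr_both_on_ge1_def by blast
  have I3: "FF x (D z) \<le> FF (x+t) (D z)" if "z \<in> R" for z
  proof -
    have "1 \<le> real (D z)" using degpos that R_def by force
    then show ?thesis unfolding FF_def rxt using mono[of "real x" "real x + real t"] x1 by simp
  qed
  have I4: "FF c (D z) \<le> FF (x+t) (D z)" if "z \<in> B" for z
  proof -
    have "1 \<le> real (D z)" using degpos that B_sub by force
    then show ?thesis unfolding FF_def rxt using mono[of "real c" "real x + real t"] cx c2 by simp
  qed
  have sI1: "0 \<le> (\<Sum>z\<in>C. FF (x+t) (D z)) - (\<Sum>z\<in>C. FF x (D z)) + (\<Sum>z\<in>C. FF (c-t) (D z)) - (\<Sum>z\<in>C. FF c (D z))"
  proof -
    have "0 \<le> (\<Sum>z\<in>C. FF (x+t) (D z) - FF x (D z) + FF (c-t) (D z) - FF c (D z))"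
      using I1 by (intro sum_nonneg) auto
    then show ?thesis by (simp add: sum.distrib sum_subtractf)
  qed
  have sI3: "(\<Sum>z\<in>R. FF x (D z)) \<le> (\<Sum>z\<in>R. FF (x+t) (D z))" using I3 by (intro sum_mono) auto
  have sI4: "(\<Sum>z\<in>B. FF c (D z)) \<le> (\<Sum>z\<in>B. FF (x+t) (D z))" using I4 by (intro sum_mono) auto
  have strict: "FF x c < FF (x+t) (c-t) \<or> (\<Sum>z\<in>B. FF c (D z)) < (\<Sum>z\<in>B. FF (x+t) (D z))"
    using H3
  proof
    assume "\<forall>x c t y. adm x c t y \<longrightarrow> expr2 f x c t > 0"
    then have "expr2 f (real x) (real c) (real t) > 0" using admy[of 1] by auto
    then show ?thesis unfolding expr2_def FF_def rxt rct by simp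
  next
    assume P: "\<forall>x t y. 2 \<le> x \<and> 1 \<le> t \<and> t + 1 \<le> x \<and> 1 \<le> y \<longrightarrow> f x y < f (x+t) y"
    have "FF c (D z) < FF (x+t) (D z)" if "z \<in> B" for z
    proof -
      have y1: "1 \<le> real (D z)" using degpos that B_sub by force
      have "f (real x) (real (D z)) < f (real x + real t) (real (D z))"
        using P y1 cx c2 tc t1 by simp
      moreover have "f (real c) (real (D z)) \<le> f (real x) (real (D z))"
        using mono[of "real c" "real x"] y1 cx c2 by simp
      ultimately show ?thesis unfolding FF_def rxt by simp
    qed
    then have "(\<Sum>z\<in>B. FF c (D z)) < (\<Sum>z\<in>B. FF (x+t) (D z))"
      using finB bB by (intro sum_strict_mono) auto
    then show ?thesis by simp
  qed
  have "BID \<Psi> E < BID \<Psi> E'"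
    using S_E S_E' Rsum A1 A1' A2 A2' sI1 sI3 sI4 I2 strict by linarith
  then show ?thesis using G' by blast
qed


lemma part1:
  fixes \<Psi> :: "nat \<Rightarrow> nat \<Rightarrow> real" and f :: "real \<Rightarrow> real \<Rightarrow> real"
  assumes sym: "\<And>a b. 1 \<le> a \<Longrightarrow> 1 \<le> b \<Longrightarrow> \<Psi> a b = \<Psi> b a"
    and ext: "\<And>a b. 1 \<le> a \<Longrightarrow> 1 \<le> b \<Longrightarrow> f (real a) (real b) = \<Psi> a b"
    and G: "conn_nm_graph n m V E"
    and mx: "\<forall>V' E'. conn_nm_graph n m V' E' \<longrightarrow> BID \<Psi> E' \<le> BID \<Psi> E"
    and H1: "\<forall>x c t y. adm x c t y \<longrightarrow> expr1 f x c t y \<ge> 0 \<and> expr2 f x c t \<ge> 0"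
    and cond: "(incr_both_on_ge1 f \<and>
        ((\<forall>x c t y. adm x c t y \<longrightarrow> expr1 f x c t y > 0) \<or>
         (\<forall>x c t y. adm x c t y \<longrightarrow> expr2 f x c t > 0)))
      \<or> strict_incr_both_on_ge1 f"
  shows "max_degree V E = n - 1"
proof -
  have H23: "incr_both_on_ge1 f \<and> ((\<forall>x c t y. adm x c t y \<longrightarrow> expr2 f x c t > 0) \<or>
             (\<forall>x t y. 2 \<le> x \<and> 1 \<le> t \<and> t + 1 \<le> x \<and> 1 \<le> y \<longrightarrow> f x y < f (x+t) y))"
    using cond
  proof
    assume a: "incr_both_on_ge1 f \<and>
        ((\<forall>x c t y. adm x c t y \<longrightarrow> expr1 f x c t y > 0) \<or>
         (\<forall>x c t y. adm x c t y \<longrightarrow> expr2 f x c t > 0))"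
    then have inc: "incr_both_on_ge1 f" by simp
    from a have "(\<forall>x c t y. adm x c t y \<longrightarrow> expr1 f x c t y > 0) \<or>
         (\<forall>x c t y. adm x c t y \<longrightarrow> expr2 f x c t > 0)" by simp
    then show ?thesis
    proof
      assume e1: "\<forall>x c t y. adm x c t y \<longrightarrow> expr1 f x c t y > 0"
      have "f x y < f (x+t) y" if "2 \<le> x" "1 \<le> t" "t + 1 \<le> x" "1 \<le> y" for x t y :: real
      proof -
        have "adm x x t y" unfolding adm_def using that by simp
        then have "expr1 f x x t y > 0" using e1 by blast
        moreover have "f (x - t) y \<le> f x y"
        proof -
          have "1 \<le> x - t \<and> x - t \<le> x \<and> 1 \<le> y" using that by linarith
          then show ?thesis using inc unfolding incr_both_on_ge1_def by blast
        qed
        ultimately show ?thesis unfolding expr1_def by simp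
      qed
      then show ?thesis using inc by blast
    qed (use inc in blast)
  next
    assume s: "strict_incr_both_on_ge1 f"
    have "incr_both_on_ge1 f" unfolding incr_both_on_ge1_def
    proof (intro allI impI)
      fix x x' y :: real assume h: "1 \<le> x \<and> x \<le> x' \<and> 1 \<le> y"
      show "f x y \<le> f x' y \<and> f y x \<le> f y x'"
      proof (cases "x = x'")
        case False then show ?thesis using s h unfolding strict_incr_both_on_ge1_def
          by (metis less_eq_real_def)
      qed simp
    qed
    moreover have "\<forall>x t y. 2 \<le> x \<and> 1 \<le> t \<and> t + 1 \<le> x \<and> 1 \<le> y \<longrightarrow> f x y < f (x+t) y"
      using s unfolding strict_incr_both_on_ge1_def by simp
    ultimately show ?thesis by blast
  qed
  have sg: "simple_graph V E" and finV: "finite V" and Vne: "V \<noteq> {}" and cV: "card V = n"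
    using G unfolding conn_nm_graph_def connected_graph_def simple_graph_def by auto
  obtain u where uV: "u \<in> V" and uM: "degree E u = Max (degree E ` V)"
  proof -
    have "Max (degree E ` V) \<in> degree E ` V" using Max_in[of "degree E ` V"] finV Vne by simp
    then obtain u where "u \<in> V" "Max (degree E ` V) = degree E u" by blast
    then show ?thesis using that by simp
  qed
  have umax: "\<forall>z\<in>V. degree E z \<le> degree E u" unfolding uM using finV by (simp add: Max_ge)
  have Nsub: "{z. {u,z} \<in> E} \<subseteq> V - {u}" using sg_nbV[OF sg, of u] sg_noloop[OF sg, of u] by auto
  have cVu: "card (V - {u}) = n - 1" using cV uV finV by simp
  have le: "degree E u \<le> n - 1"
    using deg_nb[OF sg, of u] card_mono[OF _ Nsub] finV cVu by simp
  show ?thesis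
  proof (rule ccontr)
    assume ne: "max_degree V E \<noteq> n - 1"
    have lt: "degree E u < n - 1" using le ne unfolding max_degree_def uM[symmetric] by simp
    then have clt: "card {z. {u,z} \<in> E} < card (V - {u})" using deg_nb[OF sg, of u] cVu by simp
    have neq: "{z. {u,z} \<in> E} \<noteq> V - {u}"
    proof
      assume "{z. {u,z} \<in> E} = V - {u}"
      then show False using clt by simp
    qed
    obtain w where w1: "w \<in> V - {u}" and w2: "w \<notin> {z. {u,z} \<in> E}"
      using Nsub neq by blast
    have wV: "w \<in> V" "w \<noteq> u" "{u,w} \<notin> E" using w1 w2 by auto
    obtain V' E' where c1: "conn_nm_graph n m V' E'" and c2: "BID \<Psi> E < BID \<Psi> E'"
      using core[OF sym ext G H1 conjunct1[OF H23] conjunct2[OF H23] uV umax wV] by blast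
    have "BID \<Psi> E' \<le> BID \<Psi> E" using mp[OF spec[OF spec[OF mx, of V'], of E'] c1] .
    then show False using c2 by simp
  qed
qed

lemma BID_neg: "BID (\<lambda>a b. - \<Psi> a b) E = - BID \<Psi> E"
  unfolding BID_def by (simp add: sum_negf)

theorem lemma2:
  fixes \<Psi> :: "nat \<Rightarrow> nat \<Rightarrow> real" and f :: "real \<Rightarrow> real \<Rightarrow> real"
    and n m :: nat and V :: "nat set" and E :: "nat set set"
  assumes Psi_nonneg: "\<And>a b. 1 \<le> a \<Longrightarrow> 1 \<le> b \<Longrightarrow> \<Psi> a b \<ge> 0"
    and Psi_sym: "\<And>a b. 1 \<le> a \<Longrightarrow> 1 \<le> b \<Longrightarrow> \<Psi> a b = \<Psi> b a"
    and f_ext: "\<And>a b. 1 \<le> a \<Longrightarrow> 1 \<le> b \<Longrightarrow> f (real a) (real b) = \<Psi> a b"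
    and G: "conn_nm_graph n m V E"
  shows
   "((\<forall>V' E'. conn_nm_graph n m V' E' \<longrightarrow> BID \<Psi> E' \<le> BID \<Psi> E) \<and>
     (\<forall>x c t y. adm x c t y \<longrightarrow> expr1 f x c t y \<ge> 0 \<and> expr2 f x c t \<ge> 0) \<and>
     ((incr_both_on_ge1 f \<and>
        ((\<forall>x c t y. adm x c t y \<longrightarrow> expr1 f x c t y > 0) \<or>
         (\<forall>x c t y. adm x c t y \<longrightarrow> expr2 f x c t > 0)))
      \<or> strict_incr_both_on_ge1 f)
     \<longrightarrow> max_degree V E = n - 1)
  \<and>
   ((\<forall>V' E'. conn_nm_graph n m V' E' \<longrightarrow> BID \<Psi> E \<le> BID \<Psi> E') \<and>
     (\<forall>x c t y. adm x c t y \<longrightarrow> expr1 f x c t y \<le> 0 \<and> expr2 f x c t \<le> 0) \<and>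
     ((decr_both_on_ge1 f \<and>
        ((\<forall>x c t y. adm x c t y \<longrightarrow> expr1 f x c t y < 0) \<or>
         (\<forall>x c t y. adm x c t y \<longrightarrow> expr2 f x c t < 0)))
      \<or> strict_decr_both_on_ge1 f)
     \<longrightarrow> max_degree V E = n - 1)"
proof (intro conjI impI)
  assume h: "(\<forall>V' E'. conn_nm_graph n m V' E' \<longrightarrow> BID \<Psi> E' \<le> BID \<Psi> E) \<and>
     (\<forall>x c t y. adm x c t y \<longrightarrow> expr1 f x c t y \<ge> 0 \<and> expr2 f x c t \<ge> 0) \<and>
     ((incr_both_on_ge1 f \<and>
        ((\<forall>x c t y. adm x c t y \<longrightarrow> expr1 f x c t y > 0) \<or>
         (\<forall>x c t y. adm x c t y \<longrightarrow> expr2 f x c t > 0)))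
      \<or> strict_incr_both_on_ge1 f)"
  show "max_degree V E = n - 1"
    using h by (elim conjE) (rule part1[of \<Psi> f n m V E, OF Psi_sym f_ext G]; assumption)
next
  assume h: "(\<forall>V' E'. conn_nm_graph n m V' E' \<longrightarrow> BID \<Psi> E \<le> BID \<Psi> E') \<and>
     (\<forall>x c t y. adm x c t y \<longrightarrow> expr1 f x c t y \<le> 0 \<and> expr2 f x c t \<le> 0) \<and>
     ((decr_both_on_ge1 f \<and>
        ((\<forall>x c t y. adm x c t y \<longrightarrow> expr1 f x c t y < 0) \<or>
         (\<forall>x c t y. adm x c t y \<longrightarrow> expr2 f x c t < 0)))
      \<or> strict_decr_both_on_ge1 f)"
  define \<Psi>' where "\<Psi>' = (\<lambda>a b. - \<Psi> a b)"
  define f' where "f' = (\<lambda>a b. - f a b)"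
  have sym': "\<And>a b. 1 \<le> a \<Longrightarrow> 1 \<le> b \<Longrightarrow> \<Psi>' a b = \<Psi>' b a" using Psi_sym \<Psi>'_def by simp
  have ext': "\<And>a b. 1 \<le> a \<Longrightarrow> 1 \<le> b \<Longrightarrow> f' (real a) (real b) = \<Psi>' a b" using f_ext \<Psi>'_def f'_def by simp
  have e1: "expr1 f' x c t y = - expr1 f x c t y" for x c t y unfolding expr1_def f'_def by simp
  have e2: "expr2 f' x c t = - expr2 f x c t" for x c t unfolding expr2_def f'_def by simp
  have di: "decr_both_on_ge1 f \<longleftrightarrow> incr_both_on_ge1 f'"
    unfolding decr_both_on_ge1_def incr_both_on_ge1_def f'_def by simp
  have sdi: "strict_decr_both_on_ge1 f \<longleftrightarrow> strict_incr_both_on_ge1 f'"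
    unfolding strict_decr_both_on_ge1_def strict_incr_both_on_ge1_def f'_def by simp
  have bn: "BID \<Psi>' E'' = - BID \<Psi> E''" for E'' unfolding \<Psi>'_def by (rule BID_neg)
  have mx: "\<forall>V' E'. conn_nm_graph n m V' E' \<longrightarrow> BID \<Psi>' E' \<le> BID \<Psi>' E" using h bn by simp
  have H1: "\<forall>x c t y. adm x c t y \<longrightarrow> expr1 f' x c t y \<ge> 0 \<and> expr2 f' x c t \<ge> 0" using h e1 e2 by simp
  have cond: "(incr_both_on_ge1 f' \<and>
        ((\<forall>x c t y. adm x c t y \<longrightarrow> expr1 f' x c t y > 0) \<or>
         (\<forall>x c t y. adm x c t y \<longrightarrow> expr2 f' x c t > 0)))
      \<or> strict_incr_both_on_ge1 f'" using h e1 e2 di sdi by simp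
  show "max_degree V E = n - 1" using part1[of \<Psi>' f' n m V E, OF sym' ext' G mx H1 cond] .
qed

end
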